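(* Let $\Gamma$ and $G$ be groups and suppose the projection $\mathrm{pr}\colon\Gamma\wr G\to G$ factors as $\Gamma\wr G\xrightarrow{p}H\xrightarrow{r}G$ with $p,r$ surjective homomorphisms. Let $H_1,H_2$ be normal subgroups of $H$ and write $G_i=r(H_i)$. Assume $G_1\neq1$, $G_2\neq1$, $G=G_1\times G_2$, and $[H_1,H_2]=1$. Then $\mathrm{Ker}(p)\subseteq\Gamma^G$ surjects onto $\Gamma$ under the evaluation map $e_1\colon f\mapsto f(1)$.
   Context: The wreath product is $\Gamma\wr G=\Gamma^G\rtimes G$, where $\Gamma^G$ is the group of all functions $f\colon G\to\Gamma$ and $G$ acts from the right by $f^h(g)=f(hg)$. $\mathrm{pr}\colon\Gamma\wr G\to G$, $(f,g)\mapsto g$, and $e_g\colon\Gamma^G\to\Gamma$, $f\mapsto f(g)$. *)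

theory Defs
  imports "HOL-Algebra.Algebra"
begin

text \<open>Wreath product Gamma wr G = Gamma^G semidirect G, where G acts on Gamma^G from the right
  by f^h(g) = f(h g).\<close>

definition wr_act :: "('b, 'd) monoid_scheme \<Rightarrow> ('b \<Rightarrow> 'a) \<Rightarrow> 'b \<Rightarrow> ('b \<Rightarrow> 'a)" where
  "wr_act G f h = (\<lambda>x\<in>carrier G. f (h \<otimes>\<^bsub>G\<^esub> x))"

definition wreath :: "('a, 'c) monoid_scheme \<Rightarrow> ('b, 'd) monoid_scheme \<Rightarrow> (('b \<Rightarrow> 'a) \<times> 'b) monoid" where
  "wreath Gam G =
    \<lparr> partial_object.carrier = (carrier G \<rightarrow>\<^sub>E carrier Gam) \<times> carrier G,
      monoid.mult = (\<lambda>(f, g) (f', g'). ((\<lambda>x\<in>carrier G. wr_act G f g' x \<otimes>\<^bsub>Gam\<^esub> f' x), g \<otimes>\<^bsub>G\<^esub> g')),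
      monoid.one = ((\<lambda>x\<in>carrier G. \<one>\<^bsub>Gam\<^esub>), \<one>\<^bsub>G\<^esub>) \<rparr>"

definition wr_pr :: "(('b \<Rightarrow> 'a) \<times> 'b) \<Rightarrow> 'b" where
  "wr_pr = snd"

definition wr_eval :: "'b \<Rightarrow> (('b \<Rightarrow> 'a) \<times> 'b) \<Rightarrow> 'a" where
  "wr_eval g x = fst x g"

end

theory Submission imports Defs begin

lemma wr_carrier: "carrier (wreath Gam G) = (carrier G \<rightarrow>\<^sub>E carrier Gam) \<times> carrier G"
  by (simp add: wreath_def)

lemma wr_one: "\<one>\<^bsub>wreath Gam G\<^esub> = ((\<lambda>x\<in>carrier G. \<one>\<^bsub>Gam\<^esub>), \<one>\<^bsub>G\<^esub>)"
  by (simp add: wreath_def)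

lemma wr_mult: "(f, g) \<otimes>\<^bsub>wreath Gam G\<^esub> (f', g') =
   ((\<lambda>x\<in>carrier G. f (g' \<otimes>\<^bsub>G\<^esub> x) \<otimes>\<^bsub>Gam\<^esub> f' x), g \<otimes>\<^bsub>G\<^esub> g')"
  by (auto simp: wreath_def wr_act_def restrict_def fun_eq_iff)

lemma wr_group:
  assumes GG: "group Gam" and G: "group G"
  shows "group (wreath Gam G)"
proof (rule groupI)
  interpret A: group Gam by fact
  interpret B: group G by fact
  fix x y z
  assume x: "x \<in> carrier (wreath Gam G)" and y: "y \<in> carrier (wreath Gam G)"
  then show "x \<otimes>\<^bsub>wreath Gam G\<^esub> y \<in> carrier (wreath Gam G)"
    by (cases x, cases y) (auto simp: wr_carrier wr_mult PiE_iff)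
  assume z: "z \<in> carrier (wreath Gam G)"
  show "x \<otimes>\<^bsub>wreath Gam G\<^esub> y \<otimes>\<^bsub>wreath Gam G\<^esub> z = x \<otimes>\<^bsub>wreath Gam G\<^esub> (y \<otimes>\<^bsub>wreath Gam G\<^esub> z)"
    using x y z
    by (cases x, cases y, cases z) (auto simp: wr_carrier wr_mult PiE_iff B.m_assoc A.m_assoc fun_eq_iff)
next
  interpret A: group Gam by fact
  interpret B: group G by fact
  show "\<one>\<^bsub>wreath Gam G\<^esub> \<in> carrier (wreath Gam G)"
    by (auto simp: wr_carrier wr_one)
  fix x assume x: "x \<in> carrier (wreath Gam G)"
  then show "\<one>\<^bsub>wreath Gam G\<^esub> \<otimes>\<^bsub>wreath Gam G\<^esub> x = x"
    by (cases x) (auto simp: wr_carrier wr_mult wr_one PiE_iff fun_eq_iff extensional_def)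
  obtain f g where xe: "x = (f, g)" by fastforce
  have f: "f \<in> carrier G \<rightarrow>\<^sub>E carrier Gam" and g: "g \<in> carrier G" using x xe by (auto simp: wr_carrier)
  let ?y = "((\<lambda>x\<in>carrier G. inv\<^bsub>Gam\<^esub> (f (inv\<^bsub>G\<^esub> g \<otimes>\<^bsub>G\<^esub> x))), inv\<^bsub>G\<^esub> g)"
  have "?y \<in> carrier (wreath Gam G)" using f g by (auto simp: wr_carrier PiE_iff)
  moreover have "?y \<otimes>\<^bsub>wreath Gam G\<^esub> x = \<one>\<^bsub>wreath Gam G\<^esub>"
    using f g by (auto simp: xe wr_mult wr_one PiE_iff fun_eq_iff B.m_assoc[symmetric])
  ultimately show "\<exists>y\<in>carrier (wreath Gam G). y \<otimes>\<^bsub>wreath Gam G\<^esub> x = \<one>\<^bsub>wreath Gam G\<^esub>" by blast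
qed

lemma wr_conj:
  assumes GG: "group Gam" and G: "group G"
    and phi: "phi \<in> carrier G \<rightarrow>\<^sub>E carrier Gam" and g: "g \<in> carrier G"
    and f: "f \<in> carrier G \<rightarrow>\<^sub>E carrier Gam"
  defines "c \<equiv> ((\<lambda>x\<in>carrier G. inv\<^bsub>Gam\<^esub> (f x) \<otimes>\<^bsub>Gam\<^esub> inv\<^bsub>Gam\<^esub> (phi x) \<otimes>\<^bsub>Gam\<^esub> f (g \<otimes>\<^bsub>G\<^esub> x) \<otimes>\<^bsub>Gam\<^esub> phi x), \<one>\<^bsub>G\<^esub>)"
  shows "c \<in> carrier (wreath Gam G)"
    "c = inv\<^bsub>wreath Gam G\<^esub> (f, \<one>\<^bsub>G\<^esub>) \<otimes>\<^bsub>wreath Gam G\<^esub> (inv\<^bsub>wreath Gam G\<^esub> (phi, g) \<otimes>\<^bsub>wreath Gam G\<^esub> (f, \<one>\<^bsub>G\<^esub>) \<otimes>\<^bsub>wreath Gam G\<^esub> (phi, g))"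
proof -
  interpret A: group Gam by fact
  interpret B: group G by fact
  interpret W: group "wreath Gam G" using wr_group[OF GG G] .
  show c: "c \<in> carrier (wreath Gam G)" using phi g f by (auto simp: c_def wr_carrier PiE_iff)
  have a: "(phi, g) \<in> carrier (wreath Gam G)" and F: "(f, \<one>\<^bsub>G\<^esub>) \<in> carrier (wreath Gam G)"
    using phi g f by (auto simp: wr_carrier)
  have cc: "\<And>u v. u \<in> carrier Gam \<Longrightarrow> v \<in> carrier Gam \<Longrightarrow> u \<otimes>\<^bsub>Gam\<^esub> (inv\<^bsub>Gam\<^esub> u \<otimes>\<^bsub>Gam\<^esub> v) = v"
    by (simp add: A.m_assoc[symmetric])
  have eq: "(phi, g) \<otimes>\<^bsub>wreath Gam G\<^esub> (f, \<one>\<^bsub>G\<^esub>) \<otimes>\<^bsub>wreath Gam G\<^esub> c = (f, \<one>\<^bsub>G\<^esub>) \<otimes>\<^bsub>wreath Gam G\<^esub> (phi, g)"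
    using phi g f by (auto simp: c_def wr_mult PiE_iff fun_eq_iff A.m_assoc cc)
  have "c = inv\<^bsub>wreath Gam G\<^esub> ((phi, g) \<otimes>\<^bsub>wreath Gam G\<^esub> (f, \<one>\<^bsub>G\<^esub>)) \<otimes>\<^bsub>wreath Gam G\<^esub> ((f, \<one>\<^bsub>G\<^esub>) \<otimes>\<^bsub>wreath Gam G\<^esub> (phi, g))"
    using eq a F c by (simp add: W.inv_solve_left)
  then show "c = inv\<^bsub>wreath Gam G\<^esub> (f, \<one>\<^bsub>G\<^esub>) \<otimes>\<^bsub>wreath Gam G\<^esub> (inv\<^bsub>wreath Gam G\<^esub> (phi, g) \<otimes>\<^bsub>wreath Gam G\<^esub> (f, \<one>\<^bsub>G\<^esub>) \<otimes>\<^bsub>wreath Gam G\<^esub> (phi, g))"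
    using a F by (simp add: W.inv_mult_group W.m_assoc)
qed

theorem lemma5p3:
  fixes Gam :: "('a, 'c) monoid_scheme" and G :: "('b, 'd) monoid_scheme"
    and H :: "('h, 'e) monoid_scheme"
    and p :: "(('b \<Rightarrow> 'a) \<times> 'b) \<Rightarrow> 'h" and r :: "'h \<Rightarrow> 'b"
    and H1 H2 :: "'h set"
  assumes "group Gam" and "group G" and "group H"
    and "p \<in> hom (wreath Gam G) H" and "p ` carrier (wreath Gam G) = carrier H"
    and "r \<in> hom H G" and "r ` carrier H = carrier G"
    and "\<forall>x\<in>carrier (wreath Gam G). r (p x) = wr_pr x"
    and "H1 \<lhd> H" and "H2 \<lhd> H"
    and "r ` H1 \<noteq> {\<one>\<^bsub>G\<^esub>}" and "r ` H2 \<noteq> {\<one>\<^bsub>G\<^esub>}"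
    and "(\<lambda>(x, y). x \<otimes>\<^bsub>G\<^esub> y)
           \<in> iso (subgroup_generated G (r ` H1) \<times>\<times> subgroup_generated G (r ` H2)) G"
    and "\<forall>a\<in>H1. \<forall>b\<in>H2. a \<otimes>\<^bsub>H\<^esub> b = b \<otimes>\<^bsub>H\<^esub> a"
  shows "kernel (wreath Gam G) H p \<subseteq> (carrier G \<rightarrow>\<^sub>E carrier Gam) \<times> {\<one>\<^bsub>G\<^esub>}
    \<and> wr_eval \<one>\<^bsub>G\<^esub> ` kernel (wreath Gam G) H p = carrier Gam"
proof -
  interpret A: group Gam by fact
  interpret B: group G by fact
  interpret C: group H by fact
  interpret W: group "wreath Gam G" using wr_group[OF assms(1,2)] .
  interpret P: group_hom "wreath Gam G" H p
    using W.group_axioms assms(3,4) by (simp add: group_hom_def group_hom_axioms_def)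
  interpret R: group_hom H G r
    using assms(2,3,6) by (simp add: group_hom_def group_hom_axioms_def)
  interpret N1: normal H1 H by fact
  interpret N2: normal H2 H by fact
  have rp: "\<And>x. x \<in> carrier (wreath Gam G) \<Longrightarrow> r (p x) = snd x"
    using assms(8) by (simp add: wr_pr_def)
  have part1: "kernel (wreath Gam G) H p \<subseteq> (carrier G \<rightarrow>\<^sub>E carrier Gam) \<times> {\<one>\<^bsub>G\<^esub>}"
  proof
    fix x assume x: "x \<in> kernel (wreath Gam G) H p"
    then have xc: "x \<in> carrier (wreath Gam G)" and px: "p x = \<one>\<^bsub>H\<^esub>" by (auto simp: kernel_def)
    have "snd x = \<one>\<^bsub>G\<^esub>" using rp[OF xc] px by simp
    then show "x \<in> (carrier G \<rightarrow>\<^sub>E carrier Gam) \<times> {\<one>\<^bsub>G\<^esub>}" using xc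
      by (cases x) (auto simp: wr_carrier)
  qed
  have "carrier Gam \<subseteq> wr_eval \<one>\<^bsub>G\<^esub> ` kernel (wreath Gam G) H p"
  proof
    fix gam assume gam: "gam \<in> carrier Gam"
    have "\<exists>a\<in>H1. r a \<noteq> \<one>\<^bsub>G\<^esub>"
    proof (rule ccontr)
      assume "\<not> (\<exists>a\<in>H1. r a \<noteq> \<one>\<^bsub>G\<^esub>)"
      then have "r ` H1 \<subseteq> {\<one>\<^bsub>G\<^esub>}" by auto
      moreover have "r ` H1 \<noteq> {}" using subgroup.one_closed[OF normal_imp_subgroup[OF assms(9)]] by (metis empty_iff imageI)
      ultimately show False using assms(11) subset_singleton_iff by metis
    qed
    then obtain a where aH: "a \<in> H1" and ra: "r a \<noteq> \<one>\<^bsub>G\<^esub>" by auto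
    have "\<exists>b\<in>H2. r b \<noteq> \<one>\<^bsub>G\<^esub>"
    proof (rule ccontr)
      assume "\<not> (\<exists>b\<in>H2. r b \<noteq> \<one>\<^bsub>G\<^esub>)"
      then have "r ` H2 \<subseteq> {\<one>\<^bsub>G\<^esub>}" by auto
      moreover have "r ` H2 \<noteq> {}" using subgroup.one_closed[OF normal_imp_subgroup[OF assms(10)]] by (metis empty_iff imageI)
      ultimately show False using assms(12) subset_singleton_iff by metis
    qed
    then obtain b where bH: "b \<in> H2" and rb: "r b \<noteq> \<one>\<^bsub>G\<^esub>" by auto
    have ac: "a \<in> carrier H" and bc: "b \<in> carrier H" using aH bH N1.subset N2.subset by auto
    obtain al where al: "al \<in> carrier (wreath Gam G)" "p al = a" using ac assms(5) by (metis imageE)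
    obtain be where be: "be \<in> carrier (wreath Gam G)" "p be = b" using bc assms(5) by (metis imageE)
    obtain phi g1 where ale: "al = (phi, g1)" by (metis surj_pair)
    obtain psi g2 where bee: "be = (psi, g2)" by (metis surj_pair)
    have phi: "phi \<in> carrier G \<rightarrow>\<^sub>E carrier Gam" and g1: "g1 \<in> carrier G"
      using al ale by (auto simp: wr_carrier)
    have psi: "psi \<in> carrier G \<rightarrow>\<^sub>E carrier Gam" and g2: "g2 \<in> carrier G"
      using be bee by (auto simp: wr_carrier)
    have g1a: "g1 = r a" using rp[OF al(1)] al ale by simp
    have g2b: "g2 = r b" using rp[OF be(1)] be bee by simp
    have g1n: "g1 \<noteq> \<one>\<^bsub>G\<^esub>" and g2n: "g2 \<noteq> \<one>\<^bsub>G\<^esub>" using ra rb g1a g2b by auto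
    have g12: "g1 \<otimes>\<^bsub>G\<^esub> g2 \<noteq> \<one>\<^bsub>G\<^esub>"
    proof
      assume eq: "g1 \<otimes>\<^bsub>G\<^esub> g2 = \<one>\<^bsub>G\<^esub>"
      have inj: "inj_on (\<lambda>(x, y). x \<otimes>\<^bsub>G\<^esub> y) (carrier (subgroup_generated G (r ` H1) \<times>\<times> subgroup_generated G (r ` H2)))"
        using assms(13) by (simp add: iso_def bij_betw_def)
      have sub1: "r ` H1 \<subseteq> carrier G" and sub2: "r ` H2 \<subseteq> carrier G"
        using N1.subset N2.subset by auto
      have m1: "g1 \<in> carrier (subgroup_generated G (r ` H1))" "\<one>\<^bsub>G\<^esub> \<in> carrier (subgroup_generated G (r ` H1))"
        using sub1 aH g1a by (auto simp: carrier_subgroup_generated intro: generate.incl generate.one)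
      have m2: "g2 \<in> carrier (subgroup_generated G (r ` H2))" "\<one>\<^bsub>G\<^esub> \<in> carrier (subgroup_generated G (r ` H2))"
        using sub2 bH g2b by (auto simp: carrier_subgroup_generated intro: generate.incl generate.one)
      have "(g1, g2) = (\<one>\<^bsub>G\<^esub>, \<one>\<^bsub>G\<^esub>)"
        using inj_onD[OF inj, of "(g1, g2)" "(\<one>\<^bsub>G\<^esub>, \<one>\<^bsub>G\<^esub>)"] m1 m2 eq
        by (simp add: DirProd_def)
      then show False using g1n by simp
    qed
    have g12c: "g1 \<otimes>\<^bsub>G\<^esub> g2 \<in> carrier G" using g1 g2 by simp
    have ne1: "g1 \<noteq> g1 \<otimes>\<^bsub>G\<^esub> g2" using g1 g2 g2n by simp
    have ne2: "g2 \<noteq> g1 \<otimes>\<^bsub>G\<^esub> g2" using g1 g2 g1n by simp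
    define del where "del = psi \<one>\<^bsub>G\<^esub> \<otimes>\<^bsub>Gam\<^esub> gam \<otimes>\<^bsub>Gam\<^esub> inv\<^bsub>Gam\<^esub> (psi \<one>\<^bsub>G\<^esub>)"
    have psi1: "psi \<one>\<^bsub>G\<^esub> \<in> carrier Gam" using psi by auto
    have phi2: "phi g2 \<in> carrier Gam" using phi g2 by auto
    have delc: "del \<in> carrier Gam" using psi1 gam by (simp add: del_def)
    define f where "f = (\<lambda>x\<in>carrier G. if x = g1 \<otimes>\<^bsub>G\<^esub> g2 then phi g2 \<otimes>\<^bsub>Gam\<^esub> del \<otimes>\<^bsub>Gam\<^esub> inv\<^bsub>Gam\<^esub> (phi g2) else \<one>\<^bsub>Gam\<^esub>)"
    have f: "f \<in> carrier G \<rightarrow>\<^sub>E carrier Gam" using phi2 delc by (auto simp: f_def)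
    define uf where "uf = (\<lambda>x\<in>carrier G. inv\<^bsub>Gam\<^esub> (f x) \<otimes>\<^bsub>Gam\<^esub> inv\<^bsub>Gam\<^esub> (phi x) \<otimes>\<^bsub>Gam\<^esub> f (g1 \<otimes>\<^bsub>G\<^esub> x) \<otimes>\<^bsub>Gam\<^esub> phi x)"
    note U = wr_conj[OF assms(1,2) phi g1 f, folded uf_def]
    have uf: "uf \<in> carrier G \<rightarrow>\<^sub>E carrier Gam" using U(1) by (simp add: wr_carrier)
    define kf where "kf = (\<lambda>x\<in>carrier G. inv\<^bsub>Gam\<^esub> (uf x) \<otimes>\<^bsub>Gam\<^esub> inv\<^bsub>Gam\<^esub> (psi x) \<otimes>\<^bsub>Gam\<^esub> uf (g2 \<otimes>\<^bsub>G\<^esub> x) \<otimes>\<^bsub>Gam\<^esub> psi x)"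
    note K = wr_conj[OF assms(1,2) psi g2 uf, folded kf_def]
    have Fc: "(f, \<one>\<^bsub>G\<^esub>) \<in> carrier (wreath Gam G)" using f by (simp add: wr_carrier)
    have pFc: "p (f, \<one>\<^bsub>G\<^esub>) \<in> carrier H" using Fc by simp
    have pU: "p (uf, \<one>\<^bsub>G\<^esub>) = inv\<^bsub>H\<^esub> (p (f, \<one>\<^bsub>G\<^esub>)) \<otimes>\<^bsub>H\<^esub> inv\<^bsub>H\<^esub> a \<otimes>\<^bsub>H\<^esub> p (f, \<one>\<^bsub>G\<^esub>) \<otimes>\<^bsub>H\<^esub> a"
      apply (subst U(2)) using Fc al ale ac by (simp add: C.m_assoc)
    have pUH: "p (uf, \<one>\<^bsub>G\<^esub>) \<in> H1"
    proof -
      have "inv\<^bsub>H\<^esub> (p (f, \<one>\<^bsub>G\<^esub>)) \<otimes>\<^bsub>H\<^esub> inv\<^bsub>H\<^esub> a \<otimes>\<^bsub>H\<^esub> p (f, \<one>\<^bsub>G\<^esub>) \<in> H1"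
        using N1.inv_op_closed1[OF pFc N1.m_inv_closed[OF aH]] .
      then show ?thesis unfolding pU using aH by simp
    qed
    have pUc: "p (uf, \<one>\<^bsub>G\<^esub>) \<in> carrier H" using pUH N1.subset by auto
    have comm: "p (uf, \<one>\<^bsub>G\<^esub>) \<otimes>\<^bsub>H\<^esub> b = b \<otimes>\<^bsub>H\<^esub> p (uf, \<one>\<^bsub>G\<^esub>)" using assms(14) pUH bH by blast
    have pK: "p (kf, \<one>\<^bsub>G\<^esub>) = \<one>\<^bsub>H\<^esub>"
    proof -
      have "p (kf, \<one>\<^bsub>G\<^esub>) = inv\<^bsub>H\<^esub> (p (uf, \<one>\<^bsub>G\<^esub>)) \<otimes>\<^bsub>H\<^esub> (inv\<^bsub>H\<^esub> b \<otimes>\<^bsub>H\<^esub> (p (uf, \<one>\<^bsub>G\<^esub>) \<otimes>\<^bsub>H\<^esub> b))"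
        apply (subst K(2)) using U(1) be bee bc by (simp add: C.m_assoc)
      also have "\<dots> = \<one>\<^bsub>H\<^esub>" unfolding comm using pUc bc by (simp add: C.m_assoc[symmetric])
      finally show ?thesis .
    qed
    have kk: "(kf, \<one>\<^bsub>G\<^esub>) \<in> kernel (wreath Gam G) H p" using K(1) pK by (simp add: kernel_def)
    have phic: "\<And>x. x \<in> carrier G \<Longrightarrow> phi x \<in> carrier Gam" using phi by auto
    have u1: "uf \<one>\<^bsub>G\<^esub> = \<one>\<^bsub>Gam\<^esub>"
      using g12 ne1 g1 phic[of "\<one>\<^bsub>G\<^esub>"] by (simp add: uf_def f_def)
    have cc1: "\<And>u v. u \<in> carrier Gam \<Longrightarrow> v \<in> carrier Gam \<Longrightarrow> inv\<^bsub>Gam\<^esub> u \<otimes>\<^bsub>Gam\<^esub> (u \<otimes>\<^bsub>Gam\<^esub> v) = v"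
      by (simp add: A.m_assoc[symmetric])
    have cc2: "\<And>u v. u \<in> carrier Gam \<Longrightarrow> v \<in> carrier Gam \<Longrightarrow> u \<otimes>\<^bsub>Gam\<^esub> (inv\<^bsub>Gam\<^esub> u \<otimes>\<^bsub>Gam\<^esub> v) = v"
      by (simp add: A.m_assoc[symmetric])
    have u2: "uf g2 = del"
      using ne2 g1 g2 phic[OF g2] delc by (simp add: uf_def f_def A.m_assoc cc1)
    have "kf \<one>\<^bsub>G\<^esub> = gam"
      using u1 u2 g2 psi1 gam by (simp add: kf_def del_def A.m_assoc cc1 cc2)
    then show "gam \<in> wr_eval \<one>\<^bsub>G\<^esub> ` kernel (wreath Gam G) H p"
      using kk by (force simp: wr_eval_def)
  qed
  moreover have "wr_eval \<one>\<^bsub>G\<^esub> ` kernel (wreath Gam G) H p \<subseteq> carrier Gam"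
  proof
    fix y assume "y \<in> wr_eval \<one>\<^bsub>G\<^esub> ` kernel (wreath Gam G) H p"
    then obtain x where x: "x \<in> kernel (wreath Gam G) H p" and y: "y = fst x \<one>\<^bsub>G\<^esub>"
      by (auto simp: wr_eval_def)
    have "fst x \<in> carrier G \<rightarrow>\<^sub>E carrier Gam" using subsetD[OF part1 x] by (simp add: mem_Times_iff)
    then show "y \<in> carrier Gam" using y by auto
  qed
  ultimately show ?thesis using part1 by blast
qed

end
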